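(* Let $\beta,\mu,\alpha,\omega,\delta,m_1,m_2,a_1,a_2$ be positive real numbers and consider the system of ordinary differential equations $$\dot S = S(\beta-\mu S) - S f_2(I,V),\qquad \dot I = S f_2(I,V) - \alpha I,\qquad \dot V = -\omega V + \delta I,$$ where $$f_2(I,V)=\frac{m_1 I}{a_1+I+V}+\frac{m_2 V}{a_2+I+V}.$$ Define $$\mathcal{R}_0=\frac{m_1a_2+\frac{\delta}{\omega}m_2a_1}{\alpha a_1a_2}\cdot\frac{\beta}{\mu}.$$ Then the system has an equilibrium $(S',I',V')$ with $S'>0$, $I'>0$, $V'>0$ if and only if $\mathcal{R}_0>1$, and when $\mathcal{R}_0>1$ such a positive equilibrium is unique.
   Context: $S$ denotes susceptible fish, $I$ infected fish and $V$ free virus (rescaled); $\beta$ is the birth rate and $\mu$ the density-dependent mortality rate of susceptible fish, $\alpha$ the mortality rate of infected fish, $\delta$ the viral shedding rate, $\omega$ the viral clearance rate, and $m_1,m_2,a_1,a_2$ are parameters of the force of infection. An equilibrium is a point at which all three right-hand sides vanish; a positive (endemic) equilibrium is one with all coordinates strictly positive. *)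

theory Defs
  imports Complex_Main
begin

definition f2 :: "real \<Rightarrow> real \<Rightarrow> real \<Rightarrow> real \<Rightarrow> real \<Rightarrow> real \<Rightarrow> real" where
  "f2 m1 m2 a1 a2 I V = m1 * I / (a1 + I + V) + m2 * V / (a2 + I + V)"

definition is_equilibrium ::
  "real \<Rightarrow> real \<Rightarrow> real \<Rightarrow> real \<Rightarrow> real \<Rightarrow> real \<Rightarrow> real \<Rightarrow> real \<Rightarrow> real
   \<Rightarrow> real \<Rightarrow> real \<Rightarrow> real \<Rightarrow> bool" where
  "is_equilibrium \<beta> \<mu> \<alpha> \<omega> \<delta> m1 m2 a1 a2 S I V \<longleftrightarrow>
     S * (\<beta> - \<mu> * S) - S * f2 m1 m2 a1 a2 I V = 0 \<and>
     S * f2 m1 m2 a1 a2 I V - \<alpha> * I = 0 \<and>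
     - \<omega> * V + \<delta> * I = 0"

definition R0 ::
  "real \<Rightarrow> real \<Rightarrow> real \<Rightarrow> real \<Rightarrow> real \<Rightarrow> real \<Rightarrow> real \<Rightarrow> real \<Rightarrow> real \<Rightarrow> real" where
  "R0 \<beta> \<mu> \<alpha> \<omega> \<delta> m1 m2 a1 a2 =
     (m1 * a2 + (\<delta> / \<omega>) * m2 * a1) / (\<alpha> * a1 * a2) * (\<beta> / \<mu>)"

end

theory Submission
  imports Defs
begin

definition gg :: "real \<Rightarrow> real \<Rightarrow> real \<Rightarrow> real \<Rightarrow> real \<Rightarrow> real \<Rightarrow> real" where
  "gg m1 m2 a1 a2 k I = m1/(a1+(1+k)*I) + m2*k/(a2+(1+k)*I)"

definition GG where
  "GG \<beta> \<mu> \<alpha> m1 m2 a1 a2 k I = \<beta> - \<mu>*\<alpha>/gg m1 m2 a1 a2 k I - I * gg m1 m2 a1 a2 k I"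

lemma gg_pos:
  assumes "m1 > 0" "m2 > 0" "a1 > 0" "a2 > 0" "k > 0" "I \<ge> 0"
  shows "gg m1 m2 a1 a2 k I > 0"
proof -
  have "a1+(1+k)*I > 0" "a2+(1+k)*I > 0" using assms by (auto intro!: add_pos_nonneg mult_nonneg_nonneg)
  thus ?thesis using assms unfolding gg_def by (auto intro!: add_pos_pos divide_pos_pos)
qed

lemma f2_eq:
  assumes "a1 > 0" "a2 > 0" "k > 0" "I \<ge> 0"
  shows "f2 m1 m2 a1 a2 I (k*I) = I * gg m1 m2 a1 a2 k I"
proof -
  have "a1+I+k*I = a1+(1+k)*I" "a2+I+k*I = a2+(1+k)*I" by (simp_all add: algebra_simps)
  thus ?thesis unfolding f2_def gg_def by (simp add: algebra_simps)
qed

lemma frac_dec: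
  fixes m a c x y :: real
  assumes "m > 0" "a > 0" "c > 0" "0 \<le> x" "x < y"
  shows "m/(a+c*y) < m/(a+c*x)"
proof -
  have "a + c*x > 0" using assms by (meson add_pos_nonneg less_imp_le mult_nonneg_nonneg order.trans)
  moreover have "a+c*x < a+c*y" using assms by simp
  ultimately have "0 < (a+c*y)*(a+c*x)" "a+c*x < a+c*y" by (auto intro!: mult_pos_pos)
  thus ?thesis using assms by (intro divide_strict_left_mono) auto
qed

lemma frac_inc:
  fixes m a c x y :: real
  assumes "m > 0" "a > 0" "c > 0" "0 \<le> x" "x < y"
  shows "x*(m/(a+c*x)) < y*(m/(a+c*y))"
proof -
  have p1: "a + c*x > 0" using assms by (meson add_pos_nonneg less_imp_le mult_nonneg_nonneg order.trans)
  have p2: "a + c*y > 0" using assms by (meson add_pos_nonneg less_imp_le mult_nonneg_nonneg order.trans)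
  have "x*m*(a+c*y) < y*m*(a+c*x)"
  proof -
    have "x*m*(a+c*y) = x*m*a + c*m*x*y" by (simp add: algebra_simps)
    moreover have "y*m*(a+c*x) = y*m*a + c*m*x*y" by (simp add: algebra_simps)
    moreover have "x*m*a < y*m*a" using assms by simp
    ultimately show ?thesis by simp
  qed
  thus ?thesis using p1 p2 by (simp add: field_simps)
qed

lemma gg_dec:
  assumes "m1 > 0" "m2 > 0" "a1 > 0" "a2 > 0" "k > 0" "0 \<le> x" "x < y"
  shows "gg m1 m2 a1 a2 k y < gg m1 m2 a1 a2 k x"
proof -
  have "m1/(a1+(1+k)*y) < m1/(a1+(1+k)*x)" using assms by (intro frac_dec) auto
  moreover have "(m2*k)/(a2+(1+k)*y) < (m2*k)/(a2+(1+k)*x)" using assms by (intro frac_dec) auto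
  ultimately show ?thesis unfolding gg_def by simp
qed

lemma Igg_inc:
  assumes "m1 > 0" "m2 > 0" "a1 > 0" "a2 > 0" "k > 0" "0 \<le> x" "x < y"
  shows "x * gg m1 m2 a1 a2 k x < y * gg m1 m2 a1 a2 k y"
proof -
  have "x*(m1/(a1+(1+k)*x)) < y*(m1/(a1+(1+k)*y))" using assms by (intro frac_inc) auto
  moreover have "x*((m2*k)/(a2+(1+k)*x)) < y*((m2*k)/(a2+(1+k)*y))" using assms by (intro frac_inc) auto
  ultimately show ?thesis unfolding gg_def by (simp add: distrib_left)
qed

lemma GG_dec:
  assumes "\<mu> > 0" "\<alpha> > 0" "m1 > 0" "m2 > 0" "a1 > 0" "a2 > 0" "k > 0" "0 \<le> x" "x < y"
  shows "GG \<beta> \<mu> \<alpha> m1 m2 a1 a2 k y < GG \<beta> \<mu> \<alpha> m1 m2 a1 a2 k x"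
proof -
  have gx: "gg m1 m2 a1 a2 k x > 0" and gy: "gg m1 m2 a1 a2 k y > 0" using assms gg_pos by auto
  have "gg m1 m2 a1 a2 k y < gg m1 m2 a1 a2 k x" using gg_dec assms by blast
  hence "\<mu>*\<alpha>/gg m1 m2 a1 a2 k x < \<mu>*\<alpha>/gg m1 m2 a1 a2 k y" using gx gy assms
    by (intro divide_strict_left_mono) auto
  moreover have "x * gg m1 m2 a1 a2 k x < y * gg m1 m2 a1 a2 k y" using Igg_inc assms by blast
  ultimately show ?thesis unfolding GG_def by simp
qed

lemma GG_cont:
  assumes "m1 > 0" "m2 > 0" "a1 > 0" "a2 > 0" "k > 0" "0 \<le> b"
  shows "continuous_on {0..b} (GG \<beta> \<mu> \<alpha> m1 m2 a1 a2 k)"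
proof -
  have d1: "\<forall>x\<in>{0..b}. a1+(1+k)*x \<noteq> 0" and d2: "\<forall>x\<in>{0..b}. a2+(1+k)*x \<noteq> 0"
    using assms by (auto simp: add_pos_nonneg intro!: less_imp_neq[symmetric] add_pos_nonneg)
  have cg: "continuous_on {0..b} (gg m1 m2 a1 a2 k)"
    unfolding gg_def using d1 d2 by (intro continuous_intros) auto
  have gp: "\<forall>x\<in>{0..b}. gg m1 m2 a1 a2 k x \<noteq> 0" using gg_pos assms by force
  show ?thesis unfolding GG_def[abs_def]
    using cg gp by (intro continuous_intros) auto
qed

lemma GG0:
  assumes "\<beta> > 0" "\<mu> > 0" "\<alpha> > 0" "\<omega> > 0" "\<delta> > 0"
    "m1 > 0" "m2 > 0" "a1 > 0" "a2 > 0"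
  shows "GG \<beta> \<mu> \<alpha> m1 m2 a1 a2 (\<delta>/\<omega>) 0 > 0 \<longleftrightarrow> R0 \<beta> \<mu> \<alpha> \<omega> \<delta> m1 m2 a1 a2 > 1"
proof -
  define g0 where "g0 = gg m1 m2 a1 a2 (\<delta>/\<omega>) 0"
  have g0p: "g0 > 0" unfolding g0_def using assms by (intro gg_pos) auto
  have R: "R0 \<beta> \<mu> \<alpha> \<omega> \<delta> m1 m2 a1 a2 = g0 * \<beta> / (\<alpha> * \<mu>)"
    unfolding R0_def g0_def gg_def using assms by (simp add: field_simps)
  have "GG \<beta> \<mu> \<alpha> m1 m2 a1 a2 (\<delta>/\<omega>) 0 = \<beta> - \<mu>*\<alpha>/g0" unfolding GG_def g0_def by simp
  moreover have "(\<beta> - \<mu>*\<alpha>/g0 > 0) \<longleftrightarrow> (g0*\<beta> > \<mu>*\<alpha>)" using g0p by (simp add: field_simps)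
  moreover have "(g0 * \<beta> / (\<alpha> * \<mu>) > 1) \<longleftrightarrow> (g0*\<beta> > \<mu>*\<alpha>)" using assms by (simp add: field_simps)
  ultimately show ?thesis using R by simp
qed


lemma eq_char:
  assumes "\<beta> > 0" "\<mu> > 0" "\<alpha> > 0" "\<omega> > 0" "\<delta> > 0"
    "m1 > 0" "m2 > 0" "a1 > 0" "a2 > 0" "S > 0" "I > 0"
  shows "is_equilibrium \<beta> \<mu> \<alpha> \<omega> \<delta> m1 m2 a1 a2 S I V \<longleftrightarrow>
     V = (\<delta>/\<omega>)*I \<and> S * gg m1 m2 a1 a2 (\<delta>/\<omega>) I = \<alpha> \<and> GG \<beta> \<mu> \<alpha> m1 m2 a1 a2 (\<delta>/\<omega>) I = 0"
proof -
  define k where "k = \<delta>/\<omega>"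
  define g where "g = gg m1 m2 a1 a2 k I"
  have kp: "k > 0" unfolding k_def using assms by simp
  have gp: "g > 0" unfolding g_def using assms kp by (intro gg_pos) auto
  have e3: "(- \<omega> * V + \<delta> * I = 0) \<longleftrightarrow> V = k*I" unfolding k_def using assms by (auto simp: field_simps)
  show ?thesis
  proof
    assume E: "is_equilibrium \<beta> \<mu> \<alpha> \<omega> \<delta> m1 m2 a1 a2 S I V"
    hence V: "V = k*I" using e3 unfolding is_equilibrium_def by blast
    have f: "f2 m1 m2 a1 a2 I V = I * g" unfolding V g_def using assms kp by (intro f2_eq) auto
    have "S * (I*g) = \<alpha> * I" using E f unfolding is_equilibrium_def by simp
    hence Sg: "S * g = \<alpha>" using assms by (simp add: algebra_simps)
    have "S * (\<beta> - \<mu> * S) = S * (I*g)" using E f unfolding is_equilibrium_def by simp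
    hence "\<beta> - \<mu> * S = I*g" using assms by simp
    moreover have "S = \<alpha>/g" using Sg gp by (simp add: field_simps)
    ultimately have "GG \<beta> \<mu> \<alpha> m1 m2 a1 a2 k I = 0" unfolding GG_def g_def[symmetric] by simp
    thus "V = (\<delta>/\<omega>)*I \<and> S * gg m1 m2 a1 a2 (\<delta>/\<omega>) I = \<alpha> \<and> GG \<beta> \<mu> \<alpha> m1 m2 a1 a2 (\<delta>/\<omega>) I = 0"
      using V Sg unfolding k_def g_def by simp
  next
    assume "V = (\<delta>/\<omega>)*I \<and> S * gg m1 m2 a1 a2 (\<delta>/\<omega>) I = \<alpha> \<and> GG \<beta> \<mu> \<alpha> m1 m2 a1 a2 (\<delta>/\<omega>) I = 0"
    hence V: "V = k*I" and Sg: "S*g = \<alpha>" and G: "GG \<beta> \<mu> \<alpha> m1 m2 a1 a2 k I = 0"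
      unfolding k_def g_def by auto
    have f: "f2 m1 m2 a1 a2 I V = I * g" unfolding V g_def using assms kp by (intro f2_eq) auto
    have S: "S = \<alpha>/g" using Sg gp by (simp add: field_simps)
    have "\<beta> - \<mu> * S = I*g" using G unfolding GG_def g_def[symmetric] S by simp
    thus "is_equilibrium \<beta> \<mu> \<alpha> \<omega> \<delta> m1 m2 a1 a2 S I V"
      unfolding is_equilibrium_def f using e3 V Sg
      by (simp add: algebra_simps)
  qed
qed

lemma GG_neg:
  assumes "\<beta> > 0" "\<mu> > 0" "\<alpha> > 0" "m1 > 0" "m2 > 0" "a1 > 0" "a2 > 0" "k > 0"
  shows "\<exists>b>0. GG \<beta> \<mu> \<alpha> m1 m2 a1 a2 k b < 0"
proof -
  define M where "M = m1 + m2*k"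
  define c where "c = 1 + k"
  define b where "b = 2*\<beta>*M/(\<mu>*\<alpha>*c)"
  have Mp: "M > 0" "c > 0" using assms unfolding M_def c_def by (auto intro!: add_pos_pos)
  have bp: "b > 0" unfolding b_def using assms Mp by simp
  have gp: "gg m1 m2 a1 a2 k b > 0" using assms bp by (intro gg_pos) auto
  have t1: "m1/(a1+c*b) \<le> m1/(c*b)" using assms Mp bp by (intro divide_left_mono) (auto intro!: mult_pos_pos add_pos_pos)
  have t2: "(m2*k)/(a2+c*b) \<le> (m2*k)/(c*b)" using assms Mp bp by (intro divide_left_mono) (auto intro!: mult_pos_pos add_pos_pos)
  have "gg m1 m2 a1 a2 k b \<le> M/(c*b)" using t1 t2 unfolding gg_def c_def[symmetric] M_def
    by (simp add: add_divide_distrib)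
  also have "M/(c*b) = \<mu>*\<alpha>/(2*\<beta>)" unfolding b_def using Mp assms by (simp add: field_simps)
  finally have "gg m1 m2 a1 a2 k b \<le> \<mu>*\<alpha>/(2*\<beta>)" .
  hence "\<mu>*\<alpha>/gg m1 m2 a1 a2 k b \<ge> \<mu>*\<alpha>/(\<mu>*\<alpha>/(2*\<beta>))" using gp assms
    by (intro divide_left_mono) auto
  hence "\<mu>*\<alpha>/gg m1 m2 a1 a2 k b \<ge> 2*\<beta>" using assms by simp
  moreover have "b * gg m1 m2 a1 a2 k b > 0" using bp gp by simp
  ultimately have "GG \<beta> \<mu> \<alpha> m1 m2 a1 a2 k b < 0" unfolding GG_def using assms by simp
  thus ?thesis using bp by blast
qed

theorem mainTheorem1:
  fixes \<beta> \<mu> \<alpha> \<omega> \<delta> m1 m2 a1 a2 :: real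
  assumes "\<beta> > 0" "\<mu> > 0" "\<alpha> > 0" "\<omega> > 0" "\<delta> > 0"
    "m1 > 0" "m2 > 0" "a1 > 0" "a2 > 0"
  shows "((\<exists>S I V. S > 0 \<and> I > 0 \<and> V > 0 \<and>
             is_equilibrium \<beta> \<mu> \<alpha> \<omega> \<delta> m1 m2 a1 a2 S I V)
           \<longleftrightarrow> R0 \<beta> \<mu> \<alpha> \<omega> \<delta> m1 m2 a1 a2 > 1)
       \<and> (R0 \<beta> \<mu> \<alpha> \<omega> \<delta> m1 m2 a1 a2 > 1 \<longrightarrow>
            (\<exists>!(S, I, V). S > 0 \<and> I > 0 \<and> V > 0 \<and>
               is_equilibrium \<beta> \<mu> \<alpha> \<omega> \<delta> m1 m2 a1 a2 S I V))"
proof -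
  define k where "k = \<delta>/\<omega>"
  have kp: "k > 0" unfolding k_def using assms by simp
  let ?G = "GG \<beta> \<mu> \<alpha> m1 m2 a1 a2 k"
  let ?g = "gg m1 m2 a1 a2 k"
  note ch = eq_char[OF assms, folded k_def]
  have necessity: "R0 \<beta> \<mu> \<alpha> \<omega> \<delta> m1 m2 a1 a2 > 1"
    if "S > 0" "I > 0" "V > 0" "is_equilibrium \<beta> \<mu> \<alpha> \<omega> \<delta> m1 m2 a1 a2 S I V" for S I V
  proof -
    have "?G I = 0" using ch[of S I V] that by simp
    moreover have "?G I < ?G 0" using that assms kp by (intro GG_dec) auto
    ultimately have "?G 0 > 0" by simp
    thus ?thesis using GG0[OF assms] unfolding k_def by simp
  qed
  have existence: "\<exists>S I V. S > 0 \<and> I > 0 \<and> V > 0 \<and> is_equilibrium \<beta> \<mu> \<alpha> \<omega> \<delta> m1 m2 a1 a2 S I V"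
    if R: "R0 \<beta> \<mu> \<alpha> \<omega> \<delta> m1 m2 a1 a2 > 1"
  proof -
    have G0: "?G 0 > 0" using GG0[OF assms] R unfolding k_def by simp
    obtain b where b: "b > 0" "?G b < 0" using GG_neg[of \<beta> \<mu> \<alpha> m1 m2 a1 a2 k] assms kp by auto
    have "continuous_on {0..b} ?G" using assms kp b by (intro GG_cont) auto
    then obtain x where x: "0 \<le> x" "x \<le> b" "?G x = 0"
      using IVT2'[of ?G b 0 0] b G0 by auto
    have xp: "x > 0" using x G0 by (cases "x = 0") auto
    have gp: "?g x > 0" using assms kp xp by (intro gg_pos) auto
    define S where "S = \<alpha> / ?g x"
    have Sp: "S > 0" unfolding S_def using gp assms by simp
    have "is_equilibrium \<beta> \<mu> \<alpha> \<omega> \<delta> m1 m2 a1 a2 S x (k*x)"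
      using ch[OF Sp xp] x gp unfolding S_def by simp
    moreover have "k*x > 0" using kp xp by simp
    ultimately show ?thesis using Sp xp by blast
  qed
  have uniq: "\<exists>!(S, I, V). S > 0 \<and> I > 0 \<and> V > 0 \<and>
               is_equilibrium \<beta> \<mu> \<alpha> \<omega> \<delta> m1 m2 a1 a2 S I V"
    if R: "R0 \<beta> \<mu> \<alpha> \<omega> \<delta> m1 m2 a1 a2 > 1"
  proof -
    obtain S I V where E: "S > 0" "I > 0" "V > 0" "is_equilibrium \<beta> \<mu> \<alpha> \<omega> \<delta> m1 m2 a1 a2 S I V"
      using existence[OF R] by blast
    have C: "V = k*I" "S * ?g I = \<alpha>" "?G I = 0" using ch[OF E(1,2)] E(4) by auto
    show ?thesis
    proof (rule ex1I[of _ "(S,I,V)"])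
      show "case (S,I,V) of (S, I, V) \<Rightarrow> S > 0 \<and> I > 0 \<and> V > 0 \<and>
               is_equilibrium \<beta> \<mu> \<alpha> \<omega> \<delta> m1 m2 a1 a2 S I V" using E by simp
    next
      fix y assume Y: "case y of (S, I, V) \<Rightarrow> S > 0 \<and> I > 0 \<and> V > 0 \<and>
               is_equilibrium \<beta> \<mu> \<alpha> \<omega> \<delta> m1 m2 a1 a2 S I V"
      obtain S' I' V' where y: "y = (S',I',V')" by (cases y) auto
      have E': "S' > 0" "I' > 0" "V' > 0" "is_equilibrium \<beta> \<mu> \<alpha> \<omega> \<delta> m1 m2 a1 a2 S' I' V'"
        using Y y by auto
      have C': "V' = k*I'" "S' * ?g I' = \<alpha>" "?G I' = 0" using ch[OF E'(1,2)] E'(4) by auto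
      have II: "I' = I"
      proof (rule ccontr)
        assume "I' \<noteq> I"
        hence "I' < I \<or> I < I'" by auto
        thus False
        proof
          assume "I' < I" hence "?G I < ?G I'" using assms kp E' by (intro GG_dec) auto
          thus False using C C' by simp
        next
          assume "I < I'" hence "?G I' < ?G I" using assms kp E by (intro GG_dec) auto
          thus False using C C' by simp
        qed
      qed
      have gp: "?g I > 0" using assms kp E by (intro gg_pos) auto
      have "S' = S" using C(2) C'(2) II gp by (metis mult_right_cancel less_irrefl)
      thus "y = (S,I,V)" using y II C C' by simp
    qed
  qed
  show ?thesis using necessity existence uniq by blast
qed

end
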